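(* Let $f:X\to Y$ be a continuous map between metric spaces, let $q:[a,b]\to X$ be a rectifiable path, and put $p=f\circ q$. Then: (1) there exists $\tau\in[a,b]$ such that $d(p(a),p(b))\le D^+_{q(\tau)}f\cdot\ell(q)$; (2) $\ell(p)\le \sup_{x\in\operatorname{Im} q}D_x^+f\cdot \ell(q)$.
   Context: The length of a path $q:[a,b]\to X$ in a metric space is $\ell(q)=\sup\sum_{i=0}^{n-1}d(q(t_i),q(t_{i+1}))$ over all partitions $a=t_0\le\dots\le t_n=b$; $q$ is rectifiable if $\ell(q)<\infty$. For a continuous map $f:X\to Y$ and a non-isolated point $x\in X$, $D_x^+f=\limsup_{z\to x,\,z\neq x}\frac{d(f(z),f(x))}{d(z,x)}\in[0,\infty]$ and $D_x^-f=\liminf_{z\to x,\,z\neq x}\frac{d(f(z),f(x))}{d(z,x)}\in[0,\infty]$. It is assumed that $X$ has no isolated points, and the convention $0\cdot\infty=0$ is used. *)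

theory Defs
  imports "HOL-Analysis.Analysis"
begin

definition path_length :: "(real \<Rightarrow> 'a::metric_space) \<Rightarrow> real \<Rightarrow> real \<Rightarrow> ennreal" where
  "path_length q a b =
     (SUP nt \<in> {(n::nat, t::nat \<Rightarrow> real). t 0 = a \<and> t n = b \<and> (\<forall>i<n. t i \<le> t (Suc i))}.
        (\<Sum>i<fst nt. ennreal (dist (q (snd nt i)) (q (snd nt (Suc i))))))"

definition rectifiable :: "(real \<Rightarrow> 'a::metric_space) \<Rightarrow> real \<Rightarrow> real \<Rightarrow> bool" where
  "rectifiable q a b \<longleftrightarrow> path_length q a b < \<infinity>"

definition upper_dilation :: "('a::metric_space \<Rightarrow> 'b::metric_space) \<Rightarrow> 'a \<Rightarrow> ennreal" where
  "upper_dilation f x = Limsup (at x) (\<lambda>z. ennreal (dist (f z) (f x) / dist z x))"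

end

theory Submission
  imports Defs
begin


lemma pl_upper:
  assumes "t 0 = u" "t n = v" "\<forall>i<n. t i \<le> t (Suc i)"
  shows "(\<Sum>i<n. ennreal (dist (q (t i)) (q (t (Suc i))))) \<le> path_length q u v"
  unfolding path_length_def
  by (rule SUP_upper2[of "(n,t)"]) (use assms in auto)

lemma sum_split_nat: "(\<Sum>i<n+k. g i) = (\<Sum>i<n. g i) + (\<Sum>i<k. g (n+i))" for g :: "nat \<Rightarrow> ennreal"
  by (induction k) (auto simp: add.assoc)

lemma pl_split:
  fixes q :: "real \<Rightarrow> 'a::metric_space"
  assumes "u \<le> m" "m \<le> v"
  shows "path_length q u m + path_length q m v \<le> path_length q u v"
proof -
  define S where "S x y = {(n::nat, t::nat \<Rightarrow> real). t 0 = x \<and> t n = y \<and> (\<forall>i<n. t i \<le> t (Suc i))}" for x y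
  define s where "s nt = (\<Sum>i<fst nt. ennreal (dist (q (snd nt i)) (q (snd nt (Suc i)))))" for nt
  have pl: "path_length q x y = (SUP nt\<in>S x y. s nt)" for x y
    unfolding path_length_def S_def s_def by simp
  have ne: "S x y \<noteq> {}" if "x \<le> y" for x y
  proof -
    have "(1::nat, \<lambda>i::nat. if i = 0 then x else y) \<in> S x y" using that by (auto simp: S_def)
    then show ?thesis by blast
  qed
  have key: "s P1 + s P2 \<le> path_length q u v" if h1: "P1 \<in> S u m" and h2: "P2 \<in> S m v" for P1 P2
  proof -
    obtain n t where P1: "P1 = (n,t)" "t 0 = u" "t n = m" "\<forall>i<n. t i \<le> t (Suc i)"
      using h1 unfolding S_def by blast
    obtain k w where P2: "P2 = (k,w)" "w 0 = m" "w k = v" "\<forall>i<k. w i \<le> w (Suc i)"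
      using h2 unfolding S_def by blast
    define z where "z i = (if i \<le> n then t i else w (i - n))" for i
    have z1: "z i = t i" if "i \<le> n" for i using that by (simp add: z_def)
    have z2: "z (n + j) = w j" for j using P1 P2 by (auto simp: z_def)
    have eqs: "s (n+k, z) = s P1 + s P2"
      unfolding s_def P1 P2 fst_conv snd_conv sum_split_nat
      by (simp add: z1 z2 del: add_Suc_right add: add_Suc_right[symmetric])
    have "s (n+k, z) \<le> path_length q u v"
      unfolding s_def fst_conv snd_conv
    proof (rule pl_upper)
      show "z 0 = u" using P1 by (simp add: z_def)
      show "z (n+k) = v" using z2[of k] P2 by simp
      show "\<forall>i<n + k. z i \<le> z (Suc i)"
      proof safe
        fix i assume "i < n + k"
        show "z i \<le> z (Suc i)"
        proof (cases "i < n")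
          case True then show ?thesis using P1 by (simp add: z1 Suc_leI)
        next
          case False
          then obtain j where "i = n + j" "j < k" using \<open>i < n+k\<close> by (metis add_less_imp_less_left le_Suc_ex not_less)
          then show ?thesis using z2[of j] z2[of "Suc j"] P2 by simp
        qed
      qed
    qed
    then show ?thesis using eqs by simp
  qed
  have "path_length q u m + path_length q m v = (SUP P1\<in>S u m. s P1 + path_length q m v)"
    unfolding pl[of u m] by (rule ennreal_SUP_add_left[symmetric]) (rule ne, fact)
  also have "\<dots> \<le> path_length q u v"
  proof (rule SUP_least)
    fix P1 assume P1: "P1 \<in> S u m"
    have "s P1 + path_length q m v = (SUP P2\<in>S m v. s P1 + s P2)"
      unfolding pl[of m v] using ennreal_SUP_add_left[OF ne[OF assms(2)], of s "s P1"]
      by (simp add: add.commute)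
    also have "\<dots> \<le> path_length q u v" by (rule SUP_least) (rule key[OF P1])
    finally show "s P1 + path_length q m v \<le> path_length q u v" .
  qed
  finally show ?thesis .
qed


lemma chain_mono: "\<forall>i<n. t i \<le> t (Suc i) \<Longrightarrow> t 0 \<le> (t n :: real)"
  by (induction n) (auto intro: order_trans)

lemma pl_chain:
  fixes q :: "real \<Rightarrow> 'a::metric_space"
  assumes "\<forall>i<n. t i \<le> t (Suc i)"
  shows "(\<Sum>i<n. path_length q (t i) (t (Suc i))) \<le> path_length q (t 0) (t n)"
  using assms
proof (induction n)
  case 0 then show ?case by simp
next
  case (Suc n)
  have h: "\<forall>i<n. t i \<le> t (Suc i)" using Suc.prems by simp
  have "(\<Sum>i<Suc n. path_length q (t i) (t (Suc i)))
      = (\<Sum>i<n. path_length q (t i) (t (Suc i))) + path_length q (t n) (t (Suc n))" by simp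
  also have "\<dots> \<le> path_length q (t 0) (t n) + path_length q (t n) (t (Suc n))"
    using Suc.IH[OF h] by (rule add_right_mono)
  also have "\<dots> \<le> path_length q (t 0) (t (Suc n))"
    by (rule pl_split) (use chain_mono[OF h] Suc.prems in auto)
  finally show ?case .
qed

lemma pl_mono:
  fixes q :: "real \<Rightarrow> 'a::metric_space"
  assumes "a \<le> u" "u \<le> v" "v \<le> b"
  shows "path_length q u v \<le> path_length q a b"
proof -
  have "path_length q u v \<le> path_length q a u + path_length q u v" by simp
  also have "\<dots> \<le> path_length q a v" by (rule pl_split) (use assms in auto)
  also have "\<dots> \<le> path_length q a v + path_length q v b" by simp
  also have "\<dots> \<le> path_length q a b" by (rule pl_split) (use assms in auto)
  finally show ?thesis .
qed

lemma pl_two: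
  fixes q :: "real \<Rightarrow> 'a::metric_space"
  assumes "u \<le> x" "x \<le> v"
  shows "ennreal (dist (q u) (q x) + dist (q x) (q v)) \<le> path_length q u v"
proof -
  define t where "t i = (if i = 0 then u else if i = 1 then x else v)" for i :: nat
  have "(\<Sum>i<2. ennreal (dist (q (t i)) (q (t (Suc i))))) \<le> path_length q u v"
    by (rule pl_upper) (use assms in \<open>auto simp: t_def less_2_cases_iff\<close>)
  then show ?thesis by (simp add: t_def numeral_2_eq_2 ennreal_plus[symmetric] del: ennreal_plus)
qed

lemma pl_one:
  fixes q :: "real \<Rightarrow> 'a::metric_space"
  assumes "u \<le> v"
  shows "ennreal (dist (q u) (q v)) \<le> path_length q u v"
  using pl_two[of u u v q] assms by simp


lemma local_bound:
  fixes f :: "'a::metric_space \<Rightarrow> 'b::metric_space"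
  assumes "upper_dilation f x < ennreal c"
  shows "\<exists>r\<ge>0. r < c \<and> (\<exists>\<delta>>0. \<forall>z. dist z x < \<delta> \<longrightarrow> dist (f z) (f x) \<le> r * dist z x)"
proof -
  obtain e where e: "upper_dilation f x < e" "e < ennreal c" using dense assms by blast
  obtain r where r: "e = ennreal r" "r \<ge> 0"
    using e(2) by (metis ennreal_cases ennreal_less_top order.strict_trans top.not_eq_extremum)
  have rc: "r < c" using e(2) r
    by (metis ennreal_less_iff ennreal_neg ennreal_less_zero_iff le_less_linear not_less_iff_gr_or_eq)
  have "eventually (\<lambda>z. ennreal (dist (f z) (f x) / dist z x) < e) (at x)"
    using e(1) unfolding upper_dilation_def by (rule Limsup_lessD)
  then obtain \<delta> where d: "\<delta> > 0" "\<forall>z\<in>UNIV. z \<noteq> x \<and> dist z x < \<delta> \<longrightarrow> ennreal (dist (f z) (f x) / dist z x) < e"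
    unfolding eventually_at by blast
  have "dist (f z) (f x) \<le> r * dist z x" if "dist z x < \<delta>" for z
  proof (cases "z = x")
    case True then show ?thesis by simp
  next
    case False
    then have pos: "dist z x > 0" by simp
    have "ennreal (dist (f z) (f x) / dist z x) < ennreal r" using d that False r by auto
    then have "dist (f z) (f x) / dist z x < r" by (subst (asm) ennreal_less_iff) auto
    then show ?thesis using pos by (simp add: divide_less_eq less_imp_le)
  qed
  then show ?thesis using r rc d(1) by blast
qed

lemma mvt:
  fixes f :: "'a::metric_space \<Rightarrow> 'b::metric_space"
    and q :: "real \<Rightarrow> 'a"
  assumes uv: "u \<le> v" and cq: "continuous_on {u..v} q" and fin: "path_length q u v < \<infinity>"
  shows "\<exists>\<tau>\<in>{u..v}. ennreal (dist (f (q u)) (f (q v))) \<le> upper_dilation f (q \<tau>) * path_length q u v"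
proof (rule ccontr)
  assume H: "\<not> ?thesis"
  define D where "D = dist (f (q u)) (f (q v))"
  define L where "L = path_length q u v"
  have H': "ennreal D > upper_dilation f (q \<tau>) * L" if "\<tau> \<in> {u..v}" for \<tau>
    using H that unfolding D_def L_def by (auto simp: not_le)
  have Dpos: "D > 0"
  proof (rule ccontr)
    assume "\<not> D > 0" then have "D = 0" unfolding D_def by simp
    then show False using H'[of u] uv by simp
  qed
  have L0: "L \<noteq> 0"
  proof
    assume "L = 0"
    then have "q u = q v" using pl_one[OF uv, of q] unfolding L_def by simp
    then show False using Dpos unfolding D_def by simp
  qed
  obtain Lr where Lr: "L = ennreal Lr" "Lr > 0"
  proof -
    have "L = ennreal (enn2real L)" using fin unfolding L_def by (simp add: ennreal_enn2real_if)
    moreover have "enn2real L > 0" using L0 fin unfolding L_def by (simp add: enn2real_positive_iff zero_less_iff_neq_zero)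
    ultimately show ?thesis using that by blast
  qed
  define c where "c = D / Lr"
  have cpos: "c > 0" using Dpos Lr unfolding c_def by simp
  have DcL: "D = c * Lr" using Lr unfolding c_def by simp
  have ud: "upper_dilation f (q \<tau>) < ennreal c" if "\<tau> \<in> {u..v}" for \<tau>
  proof (rule ccontr)
    assume "\<not> upper_dilation f (q \<tau>) < ennreal c"
    then have "ennreal c \<le> upper_dilation f (q \<tau>)" by simp
    then have "ennreal c * L \<le> upper_dilation f (q \<tau>) * L" by (rule mult_right_mono) simp
    moreover have "ennreal c * L = ennreal D" using DcL Lr cpos by (simp add: ennreal_mult)
    ultimately show False using H'[OF that] by simp
  qed
  define len where "len x y = enn2real (path_length q x y)" for x y
  have lenfin: "path_length q x y = ennreal (len x y)" if "u \<le> x" "x \<le> y" "y \<le> v" for x y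
  proof -
    have "path_length q x y \<le> path_length q u v" by (rule pl_mono) (use that in auto)
    then have "path_length q x y < \<infinity>" using fin by simp
    then show ?thesis unfolding len_def by (simp add: ennreal_enn2real_if)
  qed
  have len_nonneg: "len x y \<ge> 0" for x y unfolding len_def by simp
  have len_split: "len x m + len m y \<le> len x y" if "u \<le> x" "x \<le> m" "m \<le> y" "y \<le> v" for x m y
  proof -
    have "ennreal (len x m) + ennreal (len m y) \<le> ennreal (len x y)"
      using pl_split[of x m y q] that lenfin by (metis order.trans)
    then show ?thesis using len_nonneg by (simp add: ennreal_plus[symmetric] del: ennreal_plus)
  qed
  have len_two: "dist (q x) (q t) + dist (q t) (q y) \<le> len x y" if "u \<le> x" "x \<le> t" "t \<le> y" "y \<le> v" for x t y
  proof -
    have "ennreal (dist (q x) (q t) + dist (q t) (q y)) \<le> ennreal (len x y)"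
      using pl_two[of x t y q] that lenfin by (metis order.trans)
    then show ?thesis using len_nonneg by (simp add: ennreal_plus[symmetric] del: ennreal_plus)
  qed
  define P where "P x y \<longleftrightarrow> u \<le> x \<longrightarrow> y \<le> v \<longrightarrow>
      (dist (f (q x)) (f (q y)) < c * len x y \<or> f (q x) = f (q y))" for x y
  have "P u v"
    using uv
  proof (induction rule: Bolzano)
    case (trans x y z)
    show ?case unfolding P_def
    proof (intro impI)
      assume xz: "u \<le> x" "z \<le> v"
      have A: "dist (f (q x)) (f (q y)) < c * len x y \<or> f (q x) = f (q y)"
        using trans xz unfolding P_def by auto
      have B: "dist (f (q y)) (f (q z)) < c * len y z \<or> f (q y) = f (q z)"
        using trans xz unfolding P_def by auto
      have tri: "dist (f (q x)) (f (q z)) \<le> dist (f (q x)) (f (q y)) + dist (f (q y)) (f (q z))"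
        by (rule dist_triangle)
      have spl: "c * len x y + c * len y z \<le> c * len x z"
        using len_split[of x y z] trans xz cpos by (simp add: distrib_left[symmetric])
      have nn: "c * len x y \<ge> 0" "c * len y z \<ge> 0" using cpos len_nonneg by auto
      show "dist (f (q x)) (f (q z)) < c * len x z \<or> f (q x) = f (q z)"
        using A B tri spl nn by auto
    qed
  next
    case (local t)
    obtain r \<delta> where r: "r \<ge> 0" "r < c" "\<delta> > 0"
      and rb: "\<forall>z. dist z (q t) < \<delta> \<longrightarrow> dist (f z) (f (q t)) \<le> r * dist z (q t)"
      using local_bound[OF ud[of t]] local by auto
    have "continuous (at t within {u..v}) q" using cq local
      by (simp add: continuous_on_eq_continuous_within)
    then obtain d where d: "d > 0" "\<forall>s\<in>{u..v}. dist s t < d \<longrightarrow> dist (q s) (q t) < \<delta>"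
      unfolding continuous_within_eps_delta using r(3) by blast
    show ?case
    proof (intro exI[of _ d] conjI allI impI)
      show "d > 0" by fact
      fix x y assume xy: "x \<le> t \<and> t \<le> y \<and> y - x < d"
      show "P x y" unfolding P_def
      proof (intro impI)
        assume xb: "u \<le> x" "y \<le> v"
        have dx: "dist (q x) (q t) < \<delta>" using d xy xb by (auto simp: dist_real_def)
        have dy: "dist (q y) (q t) < \<delta>" using d xy xb by (auto simp: dist_real_def)
        have "dist (f (q x)) (f (q y)) \<le> dist (f (q x)) (f (q t)) + dist (f (q t)) (f (q y))"
          by (rule dist_triangle)
        also have "\<dots> \<le> r * dist (q x) (q t) + r * dist (q t) (q y)"
          using rb dx dy by (metis add_mono dist_commute)
        also have "\<dots> = r * (dist (q x) (q t) + dist (q t) (q y))" by (simp add: distrib_left)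
        also have "\<dots> \<le> r * len x y"
          using len_two[of x t y] xy xb r by (auto intro: mult_left_mono)
        finally have main: "dist (f (q x)) (f (q y)) \<le> r * len x y" .
        show "dist (f (q x)) (f (q y)) < c * len x y \<or> f (q x) = f (q y)"
        proof (cases "len x y > 0")
          case True
          then have "r * len x y < c * len x y" using r by simp
          then show ?thesis using main by simp
        next
          case False
          then have "len x y = 0" using len_nonneg[of x y] by simp
          then show ?thesis using main r by simp
        qed
      qed
    qed
  qed
  then have "D < c * len u v \<or> D = 0" unfolding P_def D_def by auto
  moreover have "len u v = Lr" using Lr unfolding len_def L_def by simp
  ultimately show False using DcL Dpos cpos Lr(2) by auto
qed


lemma chain_le: "\<forall>i<n. t i \<le> t (Suc i) \<Longrightarrow> i \<le> j \<Longrightarrow> j \<le> n \<Longrightarrow> t i \<le> (t j :: real)"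
proof (induction j)
  case 0 then show ?case by simp
next
  case (Suc j)
  then show ?case by (cases "i = Suc j") (auto intro: order_trans)
qed

theorem theorem2:
  fixes f :: "'a::metric_space \<Rightarrow> 'b::metric_space"
    and q :: "real \<Rightarrow> 'a" and a b :: real
  assumes no_isolated: "\<And>x::'a. x islimpt UNIV"
    and cont_f: "continuous_on UNIV f"
    and ab: "a \<le> b"
    and path_q: "continuous_on {a..b} q"
    and rect: "rectifiable q a b"
  shows "(\<exists>\<tau>\<in>{a..b}. ennreal (dist ((f \<circ> q) a) ((f \<circ> q) b))
              \<le> upper_dilation f (q \<tau>) * path_length q a b)
       \<and> path_length (f \<circ> q) a b
              \<le> (SUP x \<in> q ` {a..b}. upper_dilation f x) * path_length q a b"
proof
  have fin: "path_length q a b < \<infinity>" using rect unfolding rectifiable_def by simp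
  show "\<exists>\<tau>\<in>{a..b}. ennreal (dist ((f \<circ> q) a) ((f \<circ> q) b))
              \<le> upper_dilation f (q \<tau>) * path_length q a b"
    using mvt[OF ab path_q fin, of f] by simp
  define S where "S = (SUP x \<in> q ` {a..b}. upper_dilation f x)"
  show "path_length (f \<circ> q) a b \<le> S * path_length q a b"
    unfolding path_length_def[of "f \<circ> q"]
  proof (rule SUP_least)
    fix nt :: "nat \<times> (nat \<Rightarrow> real)"
    assume "nt \<in> {(n, t). t 0 = a \<and> t n = b \<and> (\<forall>i<n. t i \<le> t (Suc i))}"
    then obtain n t where nt: "nt = (n,t)" and t0: "t 0 = a" and tn: "t n = b" and mono: "\<forall>i<n. t i \<le> t (Suc i)"
      by blast
    have inab: "a \<le> t i \<and> t i \<le> b" if "i \<le> n" for i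
      using chain_le[OF mono, of 0 i] chain_le[OF mono, of i n] that t0 tn by auto
    have step: "ennreal (dist ((f \<circ> q) (t i)) ((f \<circ> q) (t (Suc i))))
        \<le> S * path_length q (t i) (t (Suc i))" if "i < n" for i
    proof -
      have i1: "a \<le> t i" "t i \<le> t (Suc i)" "t (Suc i) \<le> b"
        using inab[of i] inab[of "Suc i"] mono that by auto
      have c: "continuous_on {t i..t (Suc i)} q"
        by (rule continuous_on_subset[OF path_q]) (use i1 in auto)
      have fi: "path_length q (t i) (t (Suc i)) < \<infinity>"
        using pl_mono[of a "t i" "t (Suc i)" b q] i1 fin by simp
      obtain \<tau> where tau: "\<tau> \<in> {t i..t (Suc i)}"
        "ennreal (dist (f (q (t i))) (f (q (t (Suc i))))) \<le> upper_dilation f (q \<tau>) * path_length q (t i) (t (Suc i))"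
        using mvt[OF i1(2) c fi, of f] by blast
      have "upper_dilation f (q \<tau>) \<le> S"
        unfolding S_def by (rule SUP_upper) (use tau(1) i1 in auto)
      then have "upper_dilation f (q \<tau>) * path_length q (t i) (t (Suc i)) \<le> S * path_length q (t i) (t (Suc i))"
        by (rule mult_right_mono) simp
      then show ?thesis using tau(2) by simp
    qed
    have "(\<Sum>i<n. ennreal (dist ((f \<circ> q) (t i)) ((f \<circ> q) (t (Suc i)))))
        \<le> (\<Sum>i<n. S * path_length q (t i) (t (Suc i)))"
      by (rule sum_mono) (use step in auto)
    also have "\<dots> = S * (\<Sum>i<n. path_length q (t i) (t (Suc i)))"
      by (simp add: sum_distrib_left)
    also have "\<dots> \<le> S * path_length q a b"
      using pl_chain[OF mono, of q] t0 tn by (auto intro: mult_left_mono)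
    finally show "(\<Sum>i<fst nt. ennreal (dist ((f \<circ> q) (snd nt i)) ((f \<circ> q) (snd nt (Suc i)))))
        \<le> S * path_length q a b" by (simp add: nt)
  qed
qed

end
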